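(* Let $X$ be a countable set and let $w$ be an essentially locally finite weight on $X$. Then the pseudo metric $\delta_w$ is discrete, i.e. $(X,\delta_w)$ is a discrete space.
   Context: A weight on $X$ is a symmetric function $w:X\times X\to[0,\infty]$ with $w(x,y)=0$ if and only if $x=y$. It is essentially locally finite if $\#\{y\in X\mid w(x,y)<R\}<\infty$ for all $x\in X$ and $R>0$. A path from $x$ to $y$ is a finite sequence $(x_0,\dots,x_n)$ of pairwise distinct elements of $X$ with $x_0=x$, $x_n=y$, and $\delta_w(x,y):=\inf\{\sum_{i=1}^n w(x_{i-1},x_i)\mid (x_0,\dots,x_n)\text{ a path from }x\text{ to }y\}$ (a pseudo metric, possibly taking the value $\infty$). *)

theory Defs
  imports "HOL-Analysis.Analysis" "HOL-Library.Extended_Nonnegative_Real"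
begin

text \<open>A weight on the set X (represented by the type 'a), values in [0,\<infinity>].\<close>
definition is_weight :: "('a \<Rightarrow> 'a \<Rightarrow> ennreal) \<Rightarrow> bool" where
  "is_weight w \<longleftrightarrow> (\<forall>x y. w x y = w y x) \<and> (\<forall>x y. w x y = 0 \<longleftrightarrow> x = y)"

definition ess_locally_finite :: "('a \<Rightarrow> 'a \<Rightarrow> ennreal) \<Rightarrow> bool" where
  "ess_locally_finite w \<longleftrightarrow> (\<forall>x. \<forall>R::real. R > 0 \<longrightarrow> finite {y. w x y < ennreal R})"

definition is_path :: "'a list \<Rightarrow> 'a \<Rightarrow> 'a \<Rightarrow> bool" where
  "is_path p x y \<longleftrightarrow> p \<noteq> [] \<and> distinct p \<and> hd p = x \<and> last p = y"

definition path_length :: "('a \<Rightarrow> 'a \<Rightarrow> ennreal) \<Rightarrow> 'a list \<Rightarrow> ennreal" where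
  "path_length w p = sum_list (map (\<lambda>(a, b). w a b) (zip p (tl p)))"

definition delta_w :: "('a \<Rightarrow> 'a \<Rightarrow> ennreal) \<Rightarrow> 'a \<Rightarrow> 'a \<Rightarrow> ennreal" where
  "delta_w w x y = (INF p \<in> {p. is_path p x y}. path_length w p)"

definition pm_open :: "('a \<Rightarrow> 'a \<Rightarrow> ennreal) \<Rightarrow> 'a set \<Rightarrow> bool" where
  "pm_open d U \<longleftrightarrow> (\<forall>x\<in>U. \<exists>\<epsilon>::real. \<epsilon> > 0 \<and> {y. d x y < ennreal \<epsilon>} \<subseteq> U)"

definition pm_discrete :: "('a \<Rightarrow> 'a \<Rightarrow> ennreal) \<Rightarrow> bool" where
  "pm_discrete d \<longleftrightarrow> (\<forall>U. pm_open d U)"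

end

theory Submission
  imports Defs
begin

lemma path_ge:
  assumes "is_path p x y" "y \<noteq> x" "\<And>z. z \<noteq> x \<Longrightarrow> e \<le> w x z"
  shows "e \<le> path_length w p"
proof -
  obtain a q where p: "p = a # q" using assms(1) unfolding is_path_def by (cases p) auto
  have ax: "a = x" using assms(1) p unfolding is_path_def by simp
  have "q \<noteq> []" using assms(1,2) p ax unfolding is_path_def by auto
  then obtain b r where q: "q = b # r" by (cases q) auto
  have "b \<noteq> x" using assms(1) p q ax unfolding is_path_def by auto
  have "path_length w p = w x b + path_length w q"
    unfolding path_length_def p q ax by simp
  also have "\<dots> \<ge> w x b" by simp
  finally show ?thesis using assms(3)[OF \<open>b \<noteq> x\<close>] by (meson order_trans)
qed

theorem lemma2p2:
  fixes w :: "'a \<Rightarrow> 'a \<Rightarrow> ennreal"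
  assumes "countable (UNIV :: 'a set)"
    and "is_weight w"
    and "ess_locally_finite w"
  shows "pm_discrete (delta_w w)"
proof -
  have key: "\<exists>e::real. e > 0 \<and> (\<forall>z. z \<noteq> x \<longrightarrow> ennreal e \<le> w x z)" for x
  proof -
    define S where "S = {y. w x y < ennreal 1} - {x}"
    have "finite {y. w x y < ennreal 1}" using assms(3) unfolding ess_locally_finite_def by (metis zero_less_one)
    then have fin: "finite S" unfolding S_def by auto
    define e where "e = Min (insert 1 ((\<lambda>y. enn2real (w x y)) ` S))"
    have fin2: "finite (insert 1 ((\<lambda>y. enn2real (w x y)) ` S))" using fin by simp
    have pos: "enn2real (w x y) > 0" if "y \<in> S" for y
    proof -
      have "w x y \<noteq> 0" using that assms(2) unfolding S_def is_weight_def by auto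
      moreover have "w x y < top" using that unfolding S_def by (auto intro: less_trans)
      ultimately show ?thesis by (simp add: enn2real_positive_iff zero_less_iff_neq_zero)
    qed
    have "e > 0" unfolding e_def using fin2 pos by (subst Min_gr_iff) auto
    moreover have "ennreal e \<le> w x z" if "z \<noteq> x" for z
    proof (cases "z \<in> S")
      case True
      have "e \<le> enn2real (w x z)" unfolding e_def using fin2 True by (intro Min_le) auto
      moreover have "w x z < top" using True unfolding S_def by (auto intro: less_trans)
      ultimately show ?thesis
        by (metis ennreal_enn2real ennreal_leI less_top)
    next
      case False
      then have "w x z \<ge> 1" using that unfolding S_def by (auto simp: not_less)
      moreover have "e \<le> 1" unfolding e_def using fin2 by (intro Min_le) auto
      ultimately show ?thesis by (metis ennreal_1 ennreal_leI order_trans)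
    qed
    ultimately show ?thesis by blast
  qed
  show ?thesis unfolding pm_discrete_def pm_open_def
  proof (intro allI ballI)
    fix U :: "'a set" and x :: 'a assume "x \<in> U"
    obtain e :: real where e: "e > 0" "\<And>z. z \<noteq> x \<Longrightarrow> ennreal e \<le> w x z" using key by blast
    have "{y. delta_w w x y < ennreal e} \<subseteq> {x}"
    proof
      fix y assume y: "y \<in> {y. delta_w w x y < ennreal e}"
      show "y \<in> {x}"
      proof (rule ccontr)
        assume "y \<notin> {x}"
        then have "ennreal e \<le> delta_w w x y" unfolding delta_w_def
          using path_ge[of _ x y "ennreal e" w] e(2) by (auto intro!: INF_greatest)
        then show False using y by simp
      qed
    qed
    then show "\<exists>\<epsilon>. \<epsilon> > 0 \<and> {y. delta_w w x y < ennreal \<epsilon>} \<subseteq> U" using e(1) \<open>x \<in> U\<close> by blast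
  qed
qed

end
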